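(* The set operad $\mathcal{C}om\mathcal{T}rias=(\mathcal{C}om\mathcal{T}rias_n)_{n\ge1}$, with $\mathcal{C}om\mathcal{T}rias_n=\{e^n_J\mid \emptyset\neq J\subset[n]\}$, $\mathbb{S}_n$ acting through its action on subsets of $[n]$, and composition $\mu(e^k_J;e^{i_1}_{J_1},\dots,e^{i_k}_{J_k})=e^{i_1+\cdots+i_k}_{\bar J}$ with $\bar J=\bigcup_{j\in J}\{i_1+\cdots+i_{j-1}+a\mid a\in J_j\}$, is a basic-set operad.
   Context: A set operad is basic-set if for all $\nu_1\in P_{i_1},\dots,\nu_t\in P_{i_t}$ the map $P_t\to P_{i_1+\cdots+i_t}$, $\nu\mapsto\mu(\nu;\nu_1,\dots,\nu_t)$ is injective. *)

theory Defs
  imports Main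
begin

definition ComTrias :: "nat \<Rightarrow> nat set set" where
  "ComTrias n = {J. J \<noteq> {} \<and> J \<subseteq> {1..n}}"

text \<open>Arities and inputs are given as functions on the 1-based index set {1..k}.\<close>
definition ComTrias_comp :: "nat set \<Rightarrow> (nat \<Rightarrow> nat) \<Rightarrow> (nat \<Rightarrow> nat set) \<Rightarrow> nat set" where
  "ComTrias_comp J ar Js = (\<Union>j\<in>J. (\<lambda>a. (\<Sum>l\<in>{1..<j}. ar l) + a) ` Js j)"

definition ComTrias_basic_set :: bool where
  "ComTrias_basic_set \<longleftrightarrow>
     (\<forall>t ar Js. (\<forall>j\<in>{1..t}. Js j \<in> ComTrias (ar j)) \<longrightarrow>
        ((\<lambda>J. ComTrias_comp J ar Js) ` ComTrias t \<subseteq> ComTrias (\<Sum>j\<in>{1..t}. ar j)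
         \<and> inj_on (\<lambda>J. ComTrias_comp J ar Js) (ComTrias t)))"

end

theory Submission
  imports Defs
begin

lemma S_mono_gap:
  fixes ar :: "nat \<Rightarrow> nat"
  assumes "j < j'" "1 \<le> j"
  shows "(\<Sum>l\<in>{1..<j}. ar l) + ar j \<le> (\<Sum>l\<in>{1..<j'}. ar l)"
proof -
  have "{1..<j'} = {1..<j} \<union> {j..<j'}" using assms by auto
  hence "(\<Sum>l\<in>{1..<j'}. ar l) = (\<Sum>l\<in>{1..<j}. ar l) + (\<Sum>l\<in>{j..<j'}. ar l)"
    by (simp add: sum.union_disjoint ivl_disj_int)
  moreover have "ar j \<le> (\<Sum>l\<in>{j..<j'}. ar l)"
    using assms by (intro member_le_sum) auto
  ultimately show ?thesis by simp
qed

lemma block_unique: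
  fixes ar :: "nat \<Rightarrow> nat"
  assumes "1 \<le> j" "1 \<le> j'" "1 \<le> a" "a \<le> ar j" "1 \<le> a'" "a' \<le> ar j'"
    and eq: "(\<Sum>l\<in>{1..<j}. ar l) + a = (\<Sum>l\<in>{1..<j'}. ar l) + a'"
  shows "j = j'"
proof (rule ccontr)
  assume "j \<noteq> j'"
  then consider "j < j'" | "j' < j" by linarith
  then show False
  proof cases
    case 1 from S_mono_gap[OF 1 assms(1), of ar] assms show False by linarith
  next
    case 2 from S_mono_gap[OF 2 assms(2), of ar] assms show False by linarith
  qed
qed

lemma sub_total:
  fixes ar :: "nat \<Rightarrow> nat"
  assumes "j \<in> {1..t}"
  shows "(\<Sum>l\<in>{1..<j}. ar l) + ar j \<le> (\<Sum>l\<in>{1..t}. ar l)"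
proof -
  have "(\<Sum>l\<in>{1..<j}. ar l) + ar j = (\<Sum>l\<in>{1..<Suc j}. ar l)"
    using assms by (simp add: sum.atLeastLessThan_Suc)
  also have "\<dots> \<le> (\<Sum>l\<in>{1..t}. ar l)"
    using assms by (intro sum_mono2) auto
  finally show ?thesis .
qed

theorem mainTheorem7:
  shows "ComTrias_basic_set"
  unfolding ComTrias_basic_set_def
proof (intro allI impI conjI)
  fix t and ar :: "nat \<Rightarrow> nat" and Js
  assume H: "\<forall>j\<in>{1..t}. Js j \<in> ComTrias (ar j)"
  have H': "\<And>j. j \<in> {1..t} \<Longrightarrow> Js j \<noteq> {} \<and> Js j \<subseteq> {1..ar j}"
    using H by (auto simp: ComTrias_def)
  show "(\<lambda>J. ComTrias_comp J ar Js) ` ComTrias t \<subseteq> ComTrias (\<Sum>j\<in>{1..t}. ar j)"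
  proof
    fix X assume "X \<in> (\<lambda>J. ComTrias_comp J ar Js) ` ComTrias t"
    then obtain J where J: "J \<noteq> {}" "J \<subseteq> {1..t}" and X: "X = ComTrias_comp J ar Js"
      by (auto simp: ComTrias_def)
    obtain j where j: "j \<in> J" using J by auto
    then obtain a where "a \<in> Js j" using H' J by blast
    hence ne: "X \<noteq> {}" using X j unfolding ComTrias_comp_def by auto
    have "X \<subseteq> {1..(\<Sum>j\<in>{1..t}. ar j)}"
    proof
      fix x assume "x \<in> X"
      then obtain j a where ja: "j \<in> J" "a \<in> Js j" "x = (\<Sum>l\<in>{1..<j}. ar l) + a"
        using X unfolding ComTrias_comp_def by auto
      have "j \<in> {1..t}" using ja J by auto
      moreover have "1 \<le> a" "a \<le> ar j" using H'[OF \<open>j \<in> {1..t}\<close>] ja by auto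
      ultimately show "x \<in> {1..(\<Sum>j\<in>{1..t}. ar j)}"
        using sub_total[of j t ar] ja by auto
    qed
    thus "X \<in> ComTrias (\<Sum>j\<in>{1..t}. ar j)" using ne by (simp add: ComTrias_def)
  qed
  have key: "j \<in> J2"
    if J1: "J1 \<in> ComTrias t" and J2: "J2 \<in> ComTrias t"
      and eq: "ComTrias_comp J1 ar Js = ComTrias_comp J2 ar Js" and j: "j \<in> J1" for J1 J2 j
  proof -
    have jt: "j \<in> {1..t}" using J1 j by (auto simp: ComTrias_def)
    obtain a where a: "a \<in> Js j" using H'[OF jt] by blast
    have "(\<Sum>l\<in>{1..<j}. ar l) + a \<in> ComTrias_comp J1 ar Js"
      using a j unfolding ComTrias_comp_def by auto
    hence "(\<Sum>l\<in>{1..<j}. ar l) + a \<in> ComTrias_comp J2 ar Js" using eq by simp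
    then obtain j' a' where ja: "j' \<in> J2" "a' \<in> Js j'"
      "(\<Sum>l\<in>{1..<j}. ar l) + a = (\<Sum>l\<in>{1..<j'}. ar l) + a'"
      unfolding ComTrias_comp_def by blast
    have jt': "j' \<in> {1..t}" using J2 ja by (auto simp: ComTrias_def)
    have "j = j'"
      apply (rule block_unique[OF _ _ _ _ _ _ ja(3)])
      using jt jt' H'[OF jt] H'[OF jt'] a ja by auto
    thus ?thesis using ja by simp
  qed
  show "inj_on (\<lambda>J. ComTrias_comp J ar Js) (ComTrias t)"
    unfolding inj_on_def
  proof (intro ballI impI)
    fix J1 J2 assume "J1 \<in> ComTrias t" "J2 \<in> ComTrias t"
      "ComTrias_comp J1 ar Js = ComTrias_comp J2 ar Js"
    thus "J1 = J2" using key by blast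
  qed
qed

end
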